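(* Let $d=5$ and $n\ge4$. Let $(p_1,\dots,p_n)\in V(I_{5,n})$ and $z_1,\dots,z_n\in\mathbb{C}^4$. For each $j\in\{1,\dots,n\}$, let $W_j$ be the $4\times n$ matrix with columns $|1\rangle,\dots,|j-1\rangle,z_j,|j+1\rangle,\dots,|n\rangle$, and $M^{(j)}=W_j^T\,C\,P_j\,W_j$. Then $M^{(j)}$ is skew symmetric of rank $\le2$, and its entries are $M^{(j)}_{ik}=\langle ijk\rangle$ for $i,k\ne j$, $M^{(j)}_{ij}=\langle ij\rangle$ for $i\ne j$, $M^{(j)}_{jk}=\langle jk\rangle$ for $k\neq j$, and $M^{(j)}_{jj}=0$. In particular all $4\times4$ Pfaffians of $M^{(j)}$ vanish. Furthermore, the $n\times(n^2+n)$ matrix $(S\,|\,T_1\,|\,\cdots\,|\,T_n)$ has rank $\le4$.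
   Context: $x\cdot y=-x_1y_1+x_2y_2+\cdots+x_5y_5$ on $\mathbb{C}^5$; $V(I_{5,n})$ is the set of $(p_1,\dots,p_n)\in(\mathbb{C}^5)^n$ with $p_i\cdot p_i=0$ for all $i$ and $\sum_ip_i=0$. Dirac matrices for $d=5$ ($4\times4$): with $A=\begin{pmatrix}0&1\\-1&0\end{pmatrix}$, $B=\begin{pmatrix}0&1\\1&0\end{pmatrix}$ and $\otimes$ the Kronecker product, $\Gamma_1=A\otimes\mathrm{diag}(-1,1)$, $\Gamma_2=B\otimes\mathrm{diag}(-1,1)$, $\Gamma_3=\mathrm{Id}_2\otimes B$, $\Gamma_4=\mathrm{Id}_2\otimes\begin{pmatrix}0&-i\\i&0\end{pmatrix}$, $\Gamma_5=-i\,\Gamma_1\Gamma_2\Gamma_3\Gamma_4$. Charge conjugation matrix $C=\Gamma_4\Gamma_1$. $P_i=-p_{i1}\Gamma_1+p_{i2}\Gamma_2+\cdots+p_{i5}\Gamma_5$, $|i\rangle=P_iz_i$, $\langle ij\rangle=|i\rangle^TC|j\rangle$, $\langle ijk\rangle=|i\rangle^TCP_j|k\rangle$, $S=(\langle ij\rangle)_{i,j}$, $T_j=(\langle ijk\rangle)_{i,k}$. *)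

theory Defs
  imports "Jordan_Normal_Form.DL_Rank"
begin

text \<open>Conventions: indices are 0-based. Points p i (i < n) are complex vectors of
dimension 5, component k (k < 5) corresponding to x_(k+1) of the paper.
Spinors z i are complex vectors of dimension 4.\<close>

definition mink :: "complex vec \<Rightarrow> complex vec \<Rightarrow> complex" where
  "mink x y = - (x $ 0 * y $ 0) + (\<Sum>k\<in>{1..<5}. x $ k * y $ k)"

definition kron :: "complex mat \<Rightarrow> complex mat \<Rightarrow> complex mat" where
  "kron A B = mat (dim_row A * dim_row B) (dim_col A * dim_col B)
     (\<lambda>(i,j). A $$ (i div dim_row B, j div dim_col B) * B $$ (i mod dim_row B, j mod dim_col B))"

definition mA :: "complex mat" where "mA = mat_of_rows_list 2 [[0,1],[-1,0]]"
definition mB :: "complex mat" where "mB = mat_of_rows_list 2 [[0,1],[1,0]]"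
definition mD :: "complex mat" where "mD = mat_of_rows_list 2 [[-1,0],[0,1]]"
definition mY :: "complex mat" where "mY = mat_of_rows_list 2 [[0,-\<i>],[\<i>,0]]"

definition Gamma1 :: "complex mat" where "Gamma1 = kron mA mD"
definition Gamma2 :: "complex mat" where "Gamma2 = kron mB mD"
definition Gamma3 :: "complex mat" where "Gamma3 = kron (1\<^sub>m 2) mB"
definition Gamma4 :: "complex mat" where "Gamma4 = kron (1\<^sub>m 2) mY"
definition Gamma5 :: "complex mat" where
  "Gamma5 = (- \<i>) \<cdot>\<^sub>m (Gamma1 * Gamma2 * Gamma3 * Gamma4)"

definition Gamma :: "nat \<Rightarrow> complex mat" where
  "Gamma k = (if k = 0 then Gamma1 else if k = 1 then Gamma2 else if k = 2 then Gamma3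
              else if k = 3 then Gamma4 else Gamma5)"

definition Cconj :: "complex mat" where "Cconj = Gamma4 * Gamma1"

definition slash :: "complex vec \<Rightarrow> complex mat" where
  "slash x = (- (x $ 0)) \<cdot>\<^sub>m Gamma 0 + (x $ 1) \<cdot>\<^sub>m Gamma 1 + (x $ 2) \<cdot>\<^sub>m Gamma 2
             + (x $ 3) \<cdot>\<^sub>m Gamma 3 + (x $ 4) \<cdot>\<^sub>m Gamma 4"

definition ket :: "(nat \<Rightarrow> complex vec) \<Rightarrow> (nat \<Rightarrow> complex vec) \<Rightarrow> nat \<Rightarrow> complex vec" where
  "ket p z i = slash (p i) *\<^sub>v z i"

definition angle2 :: "(nat \<Rightarrow> complex vec) \<Rightarrow> (nat \<Rightarrow> complex vec) \<Rightarrow> nat \<Rightarrow> nat \<Rightarrow> complex" where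
  "angle2 p z i j = ket p z i \<bullet> (Cconj *\<^sub>v ket p z j)"

definition angle3 :: "(nat \<Rightarrow> complex vec) \<Rightarrow> (nat \<Rightarrow> complex vec) \<Rightarrow> nat \<Rightarrow> nat \<Rightarrow> nat \<Rightarrow> complex" where
  "angle3 p z i j k = ket p z i \<bullet> ((Cconj * slash (p j)) *\<^sub>v ket p z k)"

definition Wmat :: "nat \<Rightarrow> (nat \<Rightarrow> complex vec) \<Rightarrow> (nat \<Rightarrow> complex vec) \<Rightarrow> nat \<Rightarrow> complex mat" where
  "Wmat n p z j = mat 4 n (\<lambda>(a,b). if b = j then z j $ a else ket p z b $ a)"

definition Mmat :: "nat \<Rightarrow> (nat \<Rightarrow> complex vec) \<Rightarrow> (nat \<Rightarrow> complex vec) \<Rightarrow> nat \<Rightarrow> complex mat" where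
  "Mmat n p z j = transpose_mat (Wmat n p z j) * Cconj * slash (p j) * Wmat n p z j"

definition Smat :: "nat \<Rightarrow> (nat \<Rightarrow> complex vec) \<Rightarrow> (nat \<Rightarrow> complex vec) \<Rightarrow> complex mat" where
  "Smat n p z = mat n n (\<lambda>(i,j). angle2 p z i j)"

definition Tmat :: "nat \<Rightarrow> (nat \<Rightarrow> complex vec) \<Rightarrow> (nat \<Rightarrow> complex vec) \<Rightarrow> nat \<Rightarrow> complex mat" where
  "Tmat n p z j = mat n n (\<lambda>(i,k). angle3 p z i j k)"

definition STmat :: "nat \<Rightarrow> (nat \<Rightarrow> complex vec) \<Rightarrow> (nat \<Rightarrow> complex vec) \<Rightarrow> complex mat" where
  "STmat n p z = mat n (n * n + n) (\<lambda>(i,c). if c < n then Smat n p z $$ (i,c)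
       else Tmat n p z ((c - n) div n) $$ (i, (c - n) mod n))"

definition pf4 :: "complex mat \<Rightarrow> nat \<Rightarrow> nat \<Rightarrow> nat \<Rightarrow> nat \<Rightarrow> complex" where
  "pf4 M a b c d = M $$ (a,b) * M $$ (c,d) - M $$ (a,c) * M $$ (b,d) + M $$ (a,d) * M $$ (b,c)"

definition in_V :: "nat \<Rightarrow> (nat \<Rightarrow> complex vec) \<Rightarrow> bool" where
  "in_V n p \<longleftrightarrow> (\<forall>i<n. dim_vec (p i) = 5 \<and> mink (p i) (p i) = 0)
     \<and> (\<forall>k<5. (\<Sum>i<n. p i $ k) = 0)"

end

theory Submission
  imports Defs
begin
lemma less4: "(i::nat) < 4 \<longleftrightarrow> i = 0 \<or> i = 1 \<or> i = 2 \<or> i = 3" by auto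
lemma sum4: "sum f {0..<4::nat} = f 0 + f 1 + f 2 + (f 3 :: 'a::comm_monoid_add)"
  by (simp add: eval_nat_numeral add.assoc)
lemma mA_e: "mA $$ (i,j) = [[0,1],[-1,0]] ! i ! j" if "i<2" "j<2" using that by (simp add: mA_def mat_of_rows_list_def)
lemma mB_e: "mB $$ (i,j) = [[0,1],[1,0]] ! i ! j" if "i<2" "j<2" using that by (simp add: mB_def mat_of_rows_list_def)
lemma mD_e: "mD $$ (i,j) = [[-1,0],[0,1]] ! i ! j" if "i<2" "j<2" using that by (simp add: mD_def mat_of_rows_list_def)
lemma mY_e: "mY $$ (i,j) = [[0,-\<i>],[\<i>,0]] ! i ! j" if "i<2" "j<2" using that by (simp add: mY_def mat_of_rows_list_def)
lemma dims: "mA \<in> carrier_mat 2 2" "mB \<in> carrier_mat 2 2" "mD \<in> carrier_mat 2 2" "mY \<in> carrier_mat 2 2"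
  "1\<^sub>m 2 \<in> carrier_mat 2 2"
  unfolding mA_def mB_def mD_def mY_def mat_of_rows_list_def by (auto intro!: carrier_matI simp: eval_nat_numeral)
lemma kron_e: "A \<in> carrier_mat 2 2 \<Longrightarrow> B \<in> carrier_mat 2 2 \<Longrightarrow> i < 4 \<Longrightarrow> j < 4 \<Longrightarrow>
   kron A B $$ (i,j) = A $$ (i div 2, j div 2) * B $$ (i mod 2, j mod 2)"
  by (simp add: kron_def)
lemma kron_c: "A \<in> carrier_mat 2 2 \<Longrightarrow> B \<in> carrier_mat 2 2 \<Longrightarrow> kron A B \<in> carrier_mat 4 4"
  by (simp add: kron_def)
lemma mult4: "A \<in> carrier_mat 4 4 \<Longrightarrow> B \<in> carrier_mat 4 4 \<Longrightarrow> i<4 \<Longrightarrow> j<4 \<Longrightarrow>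
  (A*B)$$(i,j) = A$$(i,0)*B$$(0,j) + A$$(i,1)*B$$(1,j) + A$$(i,2)*B$$(2,j) + A$$(i,3)*B$$(3,j)"
  by (simp add: scalar_prod_def sum4)
lemma G1c: "Gamma1 \<in> carrier_mat 4 4" by (simp add: Gamma1_def kron_c dims)
lemma G2c: "Gamma2 \<in> carrier_mat 4 4" by (simp add: Gamma2_def kron_c dims)
lemma G3c: "Gamma3 \<in> carrier_mat 4 4" by (simp add: Gamma3_def kron_c dims)
lemma G4c: "Gamma4 \<in> carrier_mat 4 4" by (simp add: Gamma4_def kron_c dims)
lemma G12c: "Gamma1*Gamma2 \<in> carrier_mat 4 4" by (rule mult_carrier_mat[OF G1c G2c])
lemma G123c: "Gamma1*Gamma2*Gamma3 \<in> carrier_mat 4 4" by (rule mult_carrier_mat[OF G12c G3c])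
lemma G1234c: "Gamma1*Gamma2*Gamma3*Gamma4 \<in> carrier_mat 4 4" by (rule mult_carrier_mat[OF G123c G4c])
lemma G5c: "Gamma5 \<in> carrier_mat 4 4" unfolding Gamma5_def by (rule smult_carrier_mat[OF G1234c])
lemma Cc: "Cconj \<in> carrier_mat 4 4" unfolding Cconj_def by (rule mult_carrier_mat[OF G4c G1c])
lemma G1e: "i<4 \<Longrightarrow> j<4 \<Longrightarrow> Gamma1 $$ (i,j) = ([[0,0,-1,0],[0,0,0,1],[1,0,0,0],[0,-1,0,0]] :: complex list list) ! i ! j"
  apply (simp only: less4)
  apply (elim disjE)
  apply (simp_all add: Gamma1_def kron_e dims mA_e mD_e)
  done
lemma G2e: "i<4 \<Longrightarrow> j<4 \<Longrightarrow> Gamma2 $$ (i,j) = ([[0,0,-1,0],[0,0,0,1],[-1,0,0,0],[0,1,0,0]] :: complex list list) ! i ! j"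
  apply (simp only: less4)
  apply (elim disjE)
  apply (simp_all add: Gamma2_def kron_e dims mB_e mD_e)
  done
lemma G3e: "i<4 \<Longrightarrow> j<4 \<Longrightarrow> Gamma3 $$ (i,j) = ([[0,1,0,0],[1,0,0,0],[0,0,0,1],[0,0,1,0]] :: complex list list) ! i ! j"
  apply (simp only: less4)
  apply (elim disjE)
  apply (simp_all add: Gamma3_def kron_e dims mB_e)
  done
lemma G4e: "i<4 \<Longrightarrow> j<4 \<Longrightarrow> Gamma4 $$ (i,j) = ([[0,-\<i>,0,0],[\<i>,0,0,0],[0,0,0,-\<i>],[0,0,\<i>,0]] :: complex list list) ! i ! j"
  apply (simp only: less4)
  apply (elim disjE)
  apply (simp_all add: Gamma4_def kron_e dims mY_e)
  done
lemma G12e: "i<4 \<Longrightarrow> j<4 \<Longrightarrow> (Gamma1*Gamma2) $$ (i,j) = ([[1,0,0,0],[0,1,0,0],[0,0,-1,0],[0,0,0,-1]] :: complex list list) ! i ! j"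
  apply (simp only: less4)
  apply (elim disjE)
  apply (simp_all add: mult4 G1c G2c G1e G2e)
  done
lemma G123e: "i<4 \<Longrightarrow> j<4 \<Longrightarrow> (Gamma1*Gamma2*Gamma3) $$ (i,j) = ([[0,1,0,0],[1,0,0,0],[0,0,0,-1],[0,0,-1,0]] :: complex list list) ! i ! j"
  apply (simp only: less4)
  apply (elim disjE)
  apply (simp_all add: mult4[OF G12c G3c] G12e G3e)
  done
lemma G1234e: "i<4 \<Longrightarrow> j<4 \<Longrightarrow> (Gamma1*Gamma2*Gamma3*Gamma4) $$ (i,j) = ([[\<i>,0,0,0],[0,-\<i>,0,0],[0,0,-\<i>,0],[0,0,0,\<i>]] :: complex list list) ! i ! j"
  apply (simp only: less4)
  apply (elim disjE)
  apply (simp_all add: mult4[OF G123c G4c] G123e G4e)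
  done
lemma G5s: "i<4 \<Longrightarrow> j<4 \<Longrightarrow> Gamma5 $$ (i,j) = - \<i> * (Gamma1*Gamma2*Gamma3*Gamma4) $$ (i,j)"
  using G1234c unfolding Gamma5_def by (subst index_smult_mat(1)) auto
lemma G5e: "i<4 \<Longrightarrow> j<4 \<Longrightarrow> Gamma5 $$ (i,j) = ([[1,0,0,0],[0,-1,0,0],[0,0,-1,0],[0,0,0,1]] :: complex list list) ! i ! j"
  apply (simp only: less4)
  apply (elim disjE)
  apply (simp_all add: G5s G1234e)
  done
lemma Ce: "i<4 \<Longrightarrow> j<4 \<Longrightarrow> Cconj $$ (i,j) = ([[0,0,0,-\<i>],[0,0,-\<i>,0],[0,\<i>,0,0],[\<i>,0,0,0]] :: complex list list) ! i ! j"
  apply (simp only: less4)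
  apply (elim disjE)
  apply (simp_all add: Cconj_def mult4 G1c G4c G1e G4e)
  done
lemma slc: "slash x \<in> carrier_mat 4 4"
  unfolding slash_def Gamma_def using G1c G2c G3c G4c G5c by simp
lemma sle: "i<4 \<Longrightarrow> j<4 \<Longrightarrow> slash x $$ (i,j) = -(x$0)*Gamma1$$(i,j) + x$1*Gamma2$$(i,j) + x$2*Gamma3$$(i,j) + x$3*Gamma4$$(i,j) + x$4*Gamma5$$(i,j)"
  unfolding slash_def Gamma_def using G1c G2c G3c G4c G5c by simp
definition kk :: "complex vec \<Rightarrow> nat \<Rightarrow> nat \<Rightarrow> complex" where
  "kk x a b = [[0, -\<i>*x$0 - \<i>*x$1, -\<i>*x$2 + x$3, -\<i>*x$4],
    [\<i>*x$0 + \<i>*x$1, 0, \<i>*x$4, -\<i>*x$2 - x$3],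
    [\<i>*x$2 - x$3, -\<i>*x$4, 0, -\<i>*x$0 + \<i>*x$1],
    [\<i>*x$4, \<i>*x$2 + x$3, \<i>*x$0 - \<i>*x$1, 0]] ! a ! b"
lemma Ke: "a<4 \<Longrightarrow> b<4 \<Longrightarrow> (Cconj * slash x) $$ (a,b) = kk x a b"
  apply (simp only: less4)
  apply (elim disjE)
  apply (simp_all add: mult4[OF Cc slc] Ce sle G1e G2e G3e G4e G5e kk_def algebra_simps)
  done
lemma KC: "Cconj * slash x \<in> carrier_mat 4 4" by (rule mult_carrier_mat[OF Cc slc])
lemma kk_skew: "a<4 \<Longrightarrow> b<4 \<Longrightarrow> kk x a b = - kk x b a"
  apply (simp only: less4)
  apply (elim disjE)
  apply (simp_all add: kk_def algebra_simps)
  done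
lemma C_skew: "a<4 \<Longrightarrow> b<4 \<Longrightarrow> Cconj $$ (a,b) = - Cconj $$ (b,a)"
  apply (simp only: less4)
  apply (elim disjE)
  apply (simp_all add: Ce)
  done
lemma l4: "[a,b,c,d] ! 0 = a" "[a,b,c,d] ! 1 = b" "[a,b,c,d] ! 2 = c" "[a,b,c,d] ! 3 = d"
  by (simp_all add: eval_nat_numeral)
lemma mink_e: "mink x y = -(x$0*y$0) + x$1*y$1 + x$2*y$2 + x$3*y$3 + x$4*y$4"
  by (simp add: mink_def eval_nat_numeral atLeastLessThanSuc add.assoc)
definition skm :: "complex \<Rightarrow> complex \<Rightarrow> complex \<Rightarrow> complex \<Rightarrow> complex \<Rightarrow> complex \<Rightarrow> nat \<Rightarrow> nat \<Rightarrow> complex" where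
  "skm k01 k02 k03 k12 k13 k23 a b = [[0,k01,k02,k03],[-k01,0,k12,k13],[-k02,-k12,0,k23],[-k03,-k13,-k23,0]] ! a ! b"
lemma cof: "(p::complex) = 0 \<Longrightarrow> L - R = c*p \<Longrightarrow> L = R" by simp
lemma skm_pf: assumes h: "k01*k23 - k02*k13 + k03*k12 = 0" shows "a<4 \<Longrightarrow> b<4 \<Longrightarrow> i<4 \<Longrightarrow> j<4 \<Longrightarrow>
   skm k01 k02 k03 k12 k13 k23 i j * skm k01 k02 k03 k12 k13 k23 a b = skm k01 k02 k03 k12 k13 k23 a i * skm k01 k02 k03 k12 k13 k23 b j - skm k01 k02 k03 k12 k13 k23 b i * skm k01 k02 k03 k12 k13 k23 a j"
  apply (simp only: less4)
  apply (elim disjE; hypsubst_thin; simp only: skm_def l4; ((simp add: algebra_simps; fail) | (rule cof[OF h, where c=1], (simp add: algebra_simps; fail)) | (rule cof[OF h, where c="-1"], (simp add: algebra_simps; fail))))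
  done
lemma kk_skm: "a<4 \<Longrightarrow> b<4 \<Longrightarrow> kk x a b = skm (kk x 0 1) (kk x 0 2) (kk x 0 3) (kk x 1 2) (kk x 1 3) (kk x 2 3) a b"
  apply (simp only: less4)
  apply (elim disjE; hypsubst_thin; simp add: kk_def skm_def l4 algebra_simps)
  done
lemma ii: "\<i>*(\<i>*y) = -y" by (simp add: mult.assoc[symmetric])
lemma pf_gen: "(-\<i>*x0 - \<i>*x1) * (-\<i>*x0 + \<i>*x1) - (-\<i>*x2 + x3)*(-\<i>*x2 - x3) + (-\<i>*x4)*(\<i>*x4)
   = -(x0*x0) + x1*x1 + x2*x2 + x3*x3 + (x4::complex)*x4"
  by (simp add: algebra_simps ii)
lemma kk_pf0: "mink x x = 0 \<Longrightarrow> kk x 0 1 * kk x 2 3 - kk x 0 2 * kk x 1 3 + kk x 0 3 * kk x 1 2 = 0"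
  unfolding mink_e kk_def l4 using pf_gen[of "x$0" "x$1" "x$2" "x$3" "x$4"] by simp
lemma kk_pf: "mink x x = 0 \<Longrightarrow> a<4 \<Longrightarrow> b<4 \<Longrightarrow> i<4 \<Longrightarrow> j<4 \<Longrightarrow>
   kk x i j * kk x a b = kk x a i * kk x b j - kk x b i * kk x a j"
  unfolding kk_skm by (rule skm_pf[OF kk_pf0])

lemma rank_sum:
  fixes A :: "complex mat" and f g :: "nat \<Rightarrow> nat \<Rightarrow> complex"
  assumes "A \<in> carrier_mat nr nc" "\<And>r c. r<nr \<Longrightarrow> c<nc \<Longrightarrow> A$$(r,c) = (\<Sum>a<m. f a r * g a c)"
  shows "vec_space.rank nr A \<le> m"
  using assms
proof (induction m arbitrary: A)
  case 0
  then have "A = 0\<^sub>m nr nc" by (intro eq_matI) auto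
  then show ?case using vec_space.rank_0I by (metis le_refl)
next
  case (Suc m)
  define A1 where "A1 = mat nr nc (\<lambda>(r,c). \<Sum>a<m. f a r * g a c)"
  define B where "B = mat nr nc (\<lambda>(r,c). f m r * g m c)"
  have A1c: "A1 \<in> carrier_mat nr nc" and Bc: "B \<in> carrier_mat nr nc" by (auto simp: A1_def B_def)
  have "A = A1 + B" using Suc.prems by (intro eq_matI) (auto simp: A1_def B_def)
  have r1: "vec_space.rank nr A1 \<le> m" by (rule Suc.IH[OF A1c]) (simp add: A1_def)
  have r2: "vec_space.rank nr B \<le> 1"
    by (rule vec_space.rank_le_1_product_entries[OF Bc, of "f m" "g m"]) (simp add: B_def)
  have "vec_space.rank nr A \<le> vec_space.rank nr A1 + vec_space.rank nr B"
    unfolding \<open>A = A1 + B\<close> by (rule vec_space.rank_subadditive[OF A1c Bc])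
  then show ?case using r1 r2 by simp
qed


definition bf :: "(nat \<Rightarrow> nat \<Rightarrow> complex) \<Rightarrow> complex vec \<Rightarrow> complex vec \<Rightarrow> complex" where
  "bf K v w = (\<Sum>a<4. \<Sum>b<4. v$a * K a b * w$b)"

lemma bil: "A \<in> carrier_mat 4 4 \<Longrightarrow> dim_vec w = 4 \<Longrightarrow> v \<bullet> (A *\<^sub>v w) = bf (\<lambda>a b. A$$(a,b)) v w"
  unfolding bf_def scalar_prod_def
  apply (simp add: lessThan_atLeast0)
  apply (intro sum.cong refl)
  apply (simp add: scalar_prod_def sum_distrib_left mult.assoc)
  done

lemma bf_cong: "(\<And>a b. a<4 \<Longrightarrow> b<4 \<Longrightarrow> K a b = K' a b) \<Longrightarrow> (\<And>a. a<4 \<Longrightarrow> v$a = v'$a) \<Longrightarrow> (\<And>a. a<4 \<Longrightarrow> w$a = w'$a)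
  \<Longrightarrow> bf K v w = bf K' v' w'"
  unfolding bf_def by (intro sum.cong) auto

lemma bf_skew: "(\<And>a b. a<4 \<Longrightarrow> b<4 \<Longrightarrow> K a b = - K b a) \<Longrightarrow> bf K v w = - bf K w v"
proof -
  assume h: "\<And>a b. a<4 \<Longrightarrow> b<4 \<Longrightarrow> K a b = - K b a"
  have "bf K v w = (\<Sum>a<4. \<Sum>b<4. - (w$b * K b a * v$a))"
    unfolding bf_def
  proof (intro sum.cong refl)
    fix a b assume "a \<in> {..<4::nat}" "b \<in> {..<4::nat}"
    then have "K a b = - K b a" using h[of a b] by simp
    then show "v$a * K a b * w$b = - (w$b * K b a * v$a)" by simp
  qed
  also have "\<dots> = - (\<Sum>b<4. \<Sum>a<4. w$b * K b a * v$a)"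
    by (subst sum.swap) (simp add: sum_negf)
  finally show ?thesis unfolding bf_def .
qed

lemma bf_fact:
  assumes h: "\<And>a b i j. a<4 \<Longrightarrow> b<4 \<Longrightarrow> i<4 \<Longrightarrow> j<4 \<Longrightarrow> K i j * K a b = K a i * K b j - K b i * K a j"
  shows "\<exists>c U V. \<forall>v w. bf K v w = c * ((\<Sum>a<4. v$a * U a) * (\<Sum>b<4. w$b * V b) - (\<Sum>a<4. v$a * V a) * (\<Sum>b<4. w$b * U b))"
proof (cases "\<forall>s<4. \<forall>t<4. K s t = 0")
  case True
  then show ?thesis by (intro exI[of _ 0]) (simp add: bf_def)
next
  case False
  then obtain s t where st: "s<4" "t<4" "K s t \<noteq> 0" by auto
  show ?thesis
  proof (rule exI[of _ "1 / K s t"], rule exI[of _ "\<lambda>i. K s i"], rule exI[of _ "\<lambda>i. K t i"], intro allI)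
    fix v w
    have "bf K v w * K s t = (\<Sum>a<4. \<Sum>b<4. v$a * (K a b * K s t) * w$b)"
      unfolding bf_def sum_distrib_right by (intro sum.cong refl) (simp add: ac_simps)
    also have "\<dots> = (\<Sum>a<4. \<Sum>b<4. (v$a * K s a) * (w$b * K t b) - (v$a * K t a) * (w$b * K s b))"
    proof (intro sum.cong refl)
      fix a b assume "a \<in> {..<4::nat}" "b \<in> {..<4::nat}"
      then have e: "K a b * K s t = K s a * K t b - K t a * K s b" using h[of s t a b] st by simp
      show "v$a * (K a b * K s t) * w$b = (v$a * K s a) * (w$b * K t b) - (v$a * K t a) * (w$b * K s b)"
        unfolding e by (simp add: algebra_simps)
    qed
    also have "\<dots> = (\<Sum>a<4. v$a * K s a) * (\<Sum>b<4. w$b * K t b) - (\<Sum>a<4. v$a * K t a) * (\<Sum>b<4. w$b * K s b)"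
      by (simp add: sum_subtractf sum_product)
    finally show "bf K v w = 1 / K s t * ((\<Sum>a<4. v$a * K s a) * (\<Sum>b<4. w$b * K t b) - (\<Sum>a<4. v$a * K t a) * (\<Sum>b<4. w$b * K s b))"
      using st(3) by (simp add: field_simps)
  qed
qed

lemma ket_dim: "dim_vec (ket p z i) = 4"
  unfolding ket_def using slc[of "p i"] by simp

lemma angle3_bf: "angle3 p z i j k = bf (kk (p j)) (ket p z i) (ket p z k)"
  unfolding angle3_def
  by (subst bil[OF KC ket_dim]) (rule bf_cong, auto simp: Ke)

lemma angle2_bf: assumes "dim_vec (z k) = 4" shows "angle2 p z i k = bf (kk (p k)) (ket p z i) (z k)"
proof -
  have zc: "z k \<in> carrier_vec 4" by (rule carrier_vecI[OF assms])
  have "Cconj *\<^sub>v ket p z k = (Cconj * slash (p k)) *\<^sub>v z k"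
    unfolding ket_def using assoc_mult_mat_vec[OF Cc slc zc] by simp
  then have "angle2 p z i k = ket p z i \<bullet> ((Cconj * slash (p k)) *\<^sub>v z k)" unfolding angle2_def by simp
  also have "\<dots> = bf (\<lambda>a b. (Cconj * slash (p k)) $$ (a,b)) (ket p z i) (z k)"
    by (rule bil[OF KC assms])
  also have "\<dots> = bf (kk (p k)) (ket p z i) (z k)"
    by (rule bf_cong) (auto simp: Ke)
  finally show ?thesis .
qed

lemma angle2_C: "angle2 p z i k = bf (\<lambda>a b. Cconj $$ (a,b)) (ket p z i) (ket p z k)"
  unfolding angle2_def by (rule bil[OF Cc ket_dim])

lemma angle2_swap: "angle2 p z i k = - angle2 p z k i"
  unfolding angle2_C by (rule bf_skew, rule C_skew)

lemma kk_skew': "\<And>a b. a<4 \<Longrightarrow> b<4 \<Longrightarrow> kk x a b = - kk x b a" by (rule kk_skew)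
lemma tri: "W \<in> carrier_mat 4 n \<Longrightarrow> K \<in> carrier_mat 4 4 \<Longrightarrow> x<n \<Longrightarrow> y<n \<Longrightarrow>
  (transpose_mat W * K * W) $$ (x,y) = bf (\<lambda>a b. K$$(a,b)) (col W x) (col W y)"
  apply (simp add: bf_def scalar_prod_def lessThan_atLeast0 sum_distrib_right)
  apply (intro sum.cong refl)
  apply (simp add: sum_distrib_left ac_simps)
  done


lemma sum2: "(\<Sum>a<(2::nat). h a) = h 0 + (h 1 :: complex)"
  by (simp add: eval_nat_numeral)
lemma sum4': "(\<Sum>a<(4::nat). h a) = (\<Sum>a\<in>{0..<4}. h a)"
  by (simp add: lessThan_atLeast0)

lemma rank2:
  fixes A :: "complex mat"
  assumes "A \<in> carrier_mat nr nc" "\<And>r c. r<nr \<Longrightarrow> c<nc \<Longrightarrow> A$$(r,c) = fa r * ga c + fb r * gb c"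
  shows "vec_space.rank nr A \<le> 2"
  by (rule rank_sum[OF assms(1), where f="\<lambda>a. if a = 0 then fa else fb" and g="\<lambda>a. if a = 0 then ga else gb"])
     (simp add: sum2 assms(2))

lemma pf_id: "(c::complex)*(Fa*Gb - Ga*Fb) * (c*(Fc*Gd - Gc*Fd)) - c*(Fa*Gc-Ga*Fc) * (c*(Fb*Gd - Gb*Fd)) + c*(Fa*Gd - Ga*Fd)*(c*(Fb*Gc - Gb*Fc)) = 0"
  by (simp add: algebra_simps)

lemma Wc: "Wmat n p z j \<in> carrier_mat 4 n" by (simp add: Wmat_def)
lemma WTc: "transpose_mat (Wmat n p z j) \<in> carrier_mat n 4" using Wc by simp
lemma Wcol: "x<n \<Longrightarrow> a<4 \<Longrightarrow> col (Wmat n p z j) x $ a = (if x = j then z j $ a else ket p z x $ a)"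
  by (simp add: Wmat_def)
lemma Mmat_eq: "Mmat n p z j = transpose_mat (Wmat n p z j) * (Cconj * slash (p j)) * Wmat n p z j"
  unfolding Mmat_def by (simp add: assoc_mult_mat[OF WTc Cc slc])
lemma Mc: "Mmat n p z j \<in> carrier_mat n n"
  unfolding Mmat_eq by (rule mult_carrier_mat[OF mult_carrier_mat[OF WTc KC] Wc])

lemma Ment: "x<n \<Longrightarrow> y<n \<Longrightarrow> Mmat n p z j $$ (x,y) =
   bf (kk (p j)) (if x = j then z j else ket p z x) (if y = j then z j else ket p z y)"
  unfolding Mmat_eq
  apply (subst tri[OF Wc KC], assumption, assumption)
  apply (rule bf_cong)
  apply (auto simp: Ke Wcol)
  done

lemma STent: assumes "n > 0" "i < n" "c < n*n+n"
  shows "STmat n p z $$ (i,c) = (\<Sum>a<4. ket p z i $ a * (if c < n then (Cconj *\<^sub>v ket p z c) $ a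
      else ((Cconj * slash (p ((c-n) div n))) *\<^sub>v ket p z ((c-n) mod n)) $ a))"
proof (cases "c < n")
  case True
  then show ?thesis using assms Cc
    by (simp add: STmat_def Smat_def angle2_def scalar_prod_def sum4')
next
  case False
  have "(c-n) mod n < n" using assms by simp
  then show ?thesis using assms False KC Cc
    by (simp add: STmat_def Tmat_def angle3_def scalar_prod_def sum4' del: index_mult_mat_vec)
qed

theorem mainTheorem10:
  fixes n :: nat and p z :: "nat \<Rightarrow> complex vec"
  assumes "n \<ge> 4"
    and "in_V n p"
    and "\<forall>i<n. dim_vec (z i) = 4"
  shows "(\<forall>j<n.
           Mmat n p z j \<in> carrier_mat n n
         \<and> transpose_mat (Mmat n p z j) = - Mmat n p z j
         \<and> vec_space.rank n (Mmat n p z j) \<le> 2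
         \<and> (\<forall>i<n. \<forall>k<n. i \<noteq> j \<longrightarrow> k \<noteq> j \<longrightarrow> Mmat n p z j $$ (i,k) = angle3 p z i j k)
         \<and> (\<forall>i<n. i \<noteq> j \<longrightarrow> Mmat n p z j $$ (i,j) = angle2 p z i j)
         \<and> (\<forall>k<n. k \<noteq> j \<longrightarrow> Mmat n p z j $$ (j,k) = angle2 p z j k)
         \<and> Mmat n p z j $$ (j,j) = 0
         \<and> (\<forall>a b c d. a < b \<longrightarrow> b < c \<longrightarrow> c < d \<longrightarrow> d < n \<longrightarrow> pf4 (Mmat n p z j) a b c d = 0))
       \<and> vec_space.rank n (STmat n p z) \<le> 4"
proof (intro conjI allI impI)
  fix j assume j: "j < n"
  define M where "M = Mmat n p z j"
  define cw where "cw x = (if x = j then z j else ket p z x)" for x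
  have zj: "dim_vec (z j) = 4" using assms(3) j by simp
  have mk: "mink (p j) (p j) = 0" using assms(2) j unfolding in_V_def by simp
  have Me: "M $$ (x,y) = bf (kk (p j)) (cw x) (cw y)" if "x<n" "y<n" for x y
    unfolding M_def cw_def using Ment that by blast
  have sk: "bf (kk (p j)) v w = - bf (kk (p j)) w v" for v w
    by (rule bf_skew, rule kk_skew)
  obtain c U V where fac: "\<And>v w. bf (kk (p j)) v w = c * ((\<Sum>a<4. v$a * U a) * (\<Sum>b<4. w$b * V b) - (\<Sum>a<4. v$a * V a) * (\<Sum>b<4. w$b * U b))"
    using bf_fact[of "kk (p j)", OF kk_pf[OF mk]] by blast
  define F where "F x = (\<Sum>a<4. cw x $ a * U a)" for x
  define G where "G x = (\<Sum>a<4. cw x $ a * V a)" for x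
  have Mf: "M $$ (x,y) = c * (F x * G y - G x * F y)" if "x<n" "y<n" for x y
    unfolding Me[OF that] fac F_def G_def ..
  show "Mmat n p z j \<in> carrier_mat n n" by (rule Mc)
  show "transpose_mat (Mmat n p z j) = - Mmat n p z j"
    unfolding M_def[symmetric] using Mc[of n p z j, folded M_def]
  proof (intro eq_matI)
    fix x y assume xy: "x < dim_row (- M)" "y < dim_col (- M)"
    have "transpose_mat M $$ (x,y) = bf (kk (p j)) (cw y) (cw x)"
      using xy Mc[of n p z j, folded M_def] by (simp add: Me)
    also have "\<dots> = - bf (kk (p j)) (cw x) (cw y)" by (rule sk)
    also have "\<dots> = (- M) $$ (x,y)" using xy Mc[of n p z j, folded M_def] by (simp add: Me)
    finally show "transpose_mat M $$ (x,y) = (- M) $$ (x,y)" .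
  qed (use Mc[of n p z j, folded M_def] in auto)
  show "vec_space.rank n (Mmat n p z j) \<le> 2"
    unfolding M_def[symmetric]
    by (rule rank2[where fa="\<lambda>x. c * F x" and ga=G and fb="\<lambda>x. - c * G x" and gb=F, OF Mc[of n p z j, folded M_def]])
       (simp add: Mf algebra_simps)
  show "Mmat n p z j $$ (i,k) = angle3 p z i j k" if "i<n" "k<n" "i \<noteq> j" "k \<noteq> j" for i k
    unfolding M_def[symmetric] using that by (simp add: Me cw_def angle3_bf)
  show "Mmat n p z j $$ (i,j) = angle2 p z i j" if "i<n" "i \<noteq> j" for i
    unfolding M_def[symmetric] using that j by (simp add: Me cw_def angle2_bf zj)
  show "Mmat n p z j $$ (j,k) = angle2 p z j k" if "k<n" "k \<noteq> j" for k
  proof -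
    have "M $$ (j,k) = bf (kk (p j)) (z j) (ket p z k)"
      using that j by (simp add: Me cw_def)
    also have "\<dots> = - bf (kk (p j)) (ket p z k) (z j)" by (rule sk)
    also have "\<dots> = - angle2 p z k j" by (simp add: angle2_bf zj)
    also have "\<dots> = angle2 p z j k" using angle2_swap[of p z k j] by simp
    finally show ?thesis unfolding M_def .
  qed
  show "Mmat n p z j $$ (j,j) = 0"
  proof -
    have "bf (kk (p j)) (cw j) (cw j) = - bf (kk (p j)) (cw j) (cw j)" by (rule sk)
    then have "bf (kk (p j)) (cw j) (cw j) = 0" by simp
    then show ?thesis unfolding M_def using j by (simp add: Me[unfolded M_def])
  qed
  show "pf4 (Mmat n p z j) a b c' d = 0" if "a < b" "b < c'" "c' < d" "d < n" for a b c' d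
    unfolding M_def[symmetric] pf4_def using that by (simp add: Mf pf_id)
next
  have n0: "n > 0" using assms(1) by simp
  show "vec_space.rank n (STmat n p z) \<le> 4"
    by (rule rank_sum[where nc="n*n+n" and f="\<lambda>a r. ket p z r $ a" and g="\<lambda>a c. (if c < n then (Cconj *\<^sub>v ket p z c) $ a
      else ((Cconj * slash (p ((c-n) div n))) *\<^sub>v ket p z ((c-n) mod n)) $ a)"])
       (simp add: STmat_def, rule STent[OF n0], assumption+)
qed
end
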